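(* Let $n\ge1$, let $\Omega=\begin{pmatrix}0&I_n\\-I_n&0\end{pmatrix}$ and $C(X,Y)=X\Omega Y^T$ for row vectors $X,Y\in\mathbb C^{2n}$. Let $F(x)=(f_0(x),\dots,f_{2n-1}(x))$ be a vector of $2n$ (sufficiently differentiable) functions of $x$ satisfying $$C(F^{(i)},F^{(i+1)})=0\ \ (0\le i\le n-2),\qquad C(F^{(n-1)},F^{(n)})=-1.$$ Then the $(n+1)\times 2n$ matrix whose rows are, from top to bottom, $F^{(n)},F,F',\dots,F^{(n-1)}$ can be completed to a symplectic matrix $\Phi(x)\in Sp(2n,\mathbb C)$ (i.e. $\Phi\Omega\Phi^T=\Omega$) by adding $n-1$ rows on the top; that is, there is $\Phi(x)\in Sp(2n,\mathbb C)$ whose $n$-th row is $F^{(n)}$ and whose $(n+i)$-th row is $F^{(i-1)}$ for $1\le i\le n$.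
   Context: $F^{(j)}$ denotes the componentwise $j$-th derivative of $F$ with respect to $x$. *)

theory Defs
  imports Complex_Main "Jordan_Normal_Form.Matrix"
begin

definition Omega :: "nat \<Rightarrow> complex mat" where
  "Omega n = four_block_mat (0\<^sub>m n n) (1\<^sub>m n) (- (1\<^sub>m n)) (0\<^sub>m n n)"

definition Cform :: "nat \<Rightarrow> complex vec \<Rightarrow> complex vec \<Rightarrow> complex" where
  "Cform n X Y = scalar_prod X (Omega n *\<^sub>v Y)"

definition symplectic :: "nat \<Rightarrow> complex mat \<Rightarrow> bool" where
  "symplectic n Phi \<longleftrightarrow> Phi \<in> carrier_mat (2*n) (2*n) \<and>
     Phi * Omega n * transpose_mat Phi = Omega n"

end

theory Submission
  imports Defs "HOL-Complex_Analysis.Cauchy_Integral_Formula"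
begin

unbundle no vec_syntax
hide_const (open) Finite_Cartesian_Product.vec Finite_Cartesian_Product.mat
  Finite_Cartesian_Product.row Finite_Cartesian_Product.transpose


definition Bf :: "nat \<Rightarrow> (nat\<Rightarrow>complex) \<Rightarrow> (nat\<Rightarrow>complex) \<Rightarrow> complex" where
  "Bf n X Y = (\<Sum>k<n. X k * Y (k+n) - X (k+n) * Y k)"

lemma Bf_anti: "Bf n X Y = - Bf n Y X"
  unfolding Bf_def by (simp add: sum_negf[symmetric] algebra_simps)

lemma Bf_self: "Bf n X X = 0"
  using Bf_anti[of n X X] by simp

lemma Bf_lin1: "Bf n (\<lambda>k. p * X k + (\<Sum>j\<in>J. c j * Y j k)) Z = p * Bf n X Z + (\<Sum>j\<in>J. c j * Bf n (Y j) Z)"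
proof -
  have "Bf n (\<lambda>k. p * X k + (\<Sum>j\<in>J. c j * Y j k)) Z =
     (\<Sum>k<n. p * (X k * Z (k+n) - X (k+n) * Z k)) + (\<Sum>k<n. \<Sum>j\<in>J. c j * (Y j k * Z (k+n) - Y j (k+n) * Z k))"
    unfolding Bf_def sum.distrib[symmetric]
    by (rule sum.cong) (simp_all add: sum_distrib_right sum_distrib_left sum_subtractf[symmetric] algebra_simps)
  also have "\<dots> = p * Bf n X Z + (\<Sum>j\<in>J. c j * Bf n (Y j) Z)"
    unfolding Bf_def by (simp add: sum_distrib_left sum.swap[of _ J])
  finally show ?thesis .
qed

lemma Bf_lin2: "Bf n Z (\<lambda>k. p * X k + (\<Sum>j\<in>J. c j * Y j k)) = p * Bf n Z X + (\<Sum>j\<in>J. c j * Bf n Z (Y j))"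
  by (subst Bf_anti, subst Bf_lin1) (simp add: Bf_anti[of n Z] sum_negf algebra_simps)

lemma sum_delta_helper: "finite A \<Longrightarrow> (\<Sum>j\<in>A. f j * (if j = i then 1 else 0)) = (if i \<in> A then f i else (0::complex))"
  by (simp add: if_distrib[where f="\<lambda>x. _ * x"] cong: if_cong)

lemma dual_exists:
  assumes vv: "\<forall>a<n. \<forall>b<n. Bf n (v a) (v b) = 0"
    and yv: "\<forall>k<n. \<forall>j<k. Bf n (y k) (v j) = 0"
    and yvk: "\<forall>k<n. Bf n (y k) (v k) \<noteq> 0"
  shows "m \<le> n \<Longrightarrow> \<exists>u. \<forall>a. n - m \<le> a \<longrightarrow> a < n \<longrightarrow> (\<forall>j<n. Bf n (u a) (v j) = (if a = j then 1 else 0))"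
proof (induction m)
  case 0
  then show ?case by auto
next
  case (Suc m)
  then obtain u where u: "\<forall>a. n - m \<le> a \<longrightarrow> a < n \<longrightarrow> (\<forall>j<n. Bf n (u a) (v j) = (if a = j then 1 else 0))"
    by auto
  define a0 where "a0 = n - Suc m"
  have a0n: "a0 < n" using Suc.prems unfolding a0_def by simp
  define c where "c = Bf n (y a0) (v a0)"
  have c0: "c \<noteq> 0" using yvk a0n unfolding c_def by auto
  define u' where "u' = u(a0 := (\<lambda>k. (1/c) * y a0 k + (\<Sum>j\<in>{a0<..<n}. (- Bf n (y a0) (v j) / c) * u j k)))"
  have new: "\<forall>j<n. Bf n (u' a0) (v j) = (if a0 = j then 1 else 0)"
  proof (intro allI impI)
    fix i assume i: "i < n"
    have "Bf n (u' a0) (v i) = (1/c) * Bf n (y a0) (v i) + (\<Sum>j\<in>{a0<..<n}. (- Bf n (y a0) (v j) / c) * Bf n (u j) (v i))"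
      unfolding u'_def fun_upd_same by (rule Bf_lin1)
    also have "(\<Sum>j\<in>{a0<..<n}. (- Bf n (y a0) (v j) / c) * Bf n (u j) (v i)) =
        (\<Sum>j\<in>{a0<..<n}. (- Bf n (y a0) (v j) / c) * (if j = i then 1 else 0))"
      using u i unfolding a0_def by (intro sum.cong) auto
    also have "\<dots> = (if i \<in> {a0<..<n} then - Bf n (y a0) (v i) / c else 0)"
      by (rule sum_delta_helper) simp
    finally have eq: "Bf n (u' a0) (v i) = 1 / c * Bf n (y a0) (v i) + (if i \<in> {a0<..<n} then - Bf n (y a0) (v i) / c else 0)" .
    have "i < a0 \<Longrightarrow> Bf n (y a0) (v i) = 0" using yv a0n by auto
    then show "Bf n (u' a0) (v i) = (if a0 = i then 1 else 0)"
      using c0 i eq unfolding c_def by (cases "a0 < i"; cases "i < a0") (auto simp: field_simps)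
  qed
  have old: "\<forall>a. n - m \<le> a \<longrightarrow> a < n \<longrightarrow> u' a = u a"
    unfolding u'_def a0_def using Suc.prems by auto
  have "\<forall>a. n - Suc m \<le> a \<longrightarrow> a < n \<longrightarrow> (\<forall>j<n. Bf n (u' a) (v j) = (if a = j then 1 else 0))"
  proof (intro allI impI)
    fix a j assume a: "n - Suc m \<le> a" "a < n" "j < n"
    show "Bf n (u' a) (v j) = (if a = j then 1 else 0)"
    proof (cases "a = a0")
      case True then show ?thesis using new a(3) by simp
    next
      case False
      then have "n - m \<le> a" using a unfolding a0_def by linarith
      then show ?thesis using old u a by simp
    qed
  qed
  then show ?case by blast
qed

lemma symp_complete:
  assumes vv: "\<forall>a<n. \<forall>b<n. Bf n (v a) (v b) = 0"
    and yv: "\<forall>k<n. \<forall>j<k. Bf n (y k) (v j) = 0"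
    and yvk: "\<forall>k<n. Bf n (y k) (v k) \<noteq> 0"
    and wv: "\<forall>j<n. Bf n w (v j) = (if n - 1 = j then 1 else 0)"
    and n1: "n \<ge> 1"
  shows "\<exists>u. u (n-1) = w \<and> (\<forall>a<n. \<forall>b<n. Bf n (u a) (u b) = 0) \<and>
    (\<forall>a<n. \<forall>b<n. Bf n (u a) (v b) = (if a=b then 1 else 0))"
proof -
  obtain u0 where u0: "\<forall>a<n. \<forall>j<n. Bf n (u0 a) (v j) = (if a = j then 1 else 0)"
    using dual_exists[OF vv yv yvk, of n] by auto
  define u1 where "u1 = u0(n-1 := w)"
  have u1: "\<forall>a<n. \<forall>j<n. Bf n (u1 a) (v j) = (if a = j then 1 else 0)"
    using u0 wv unfolding u1_def by auto
  define S where "S a b = Bf n (u1 a) (u1 b)" for a b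
  define u where "u a = (\<lambda>k. 1 * u1 a k + (\<Sum>b\<in>{a<..<n}. S a b * v b k))" for a
  have uv: "\<forall>a<n. \<forall>b<n. Bf n (u a) (v b) = (if a=b then 1 else 0)"
  proof (intro allI impI)
    fix a b assume ab: "a < n" "b < n"
    have "Bf n (u a) (v b) = Bf n (u1 a) (v b) + (\<Sum>c\<in>{a<..<n}. S a c * Bf n (v c) (v b))"
      unfolding u_def Bf_lin1 by simp
    also have "(\<Sum>c\<in>{a<..<n}. S a c * Bf n (v c) (v b)) = 0"
      using vv ab by (intro sum.neutral) auto
    finally show "Bf n (u a) (v b) = (if a=b then 1 else 0)" using u1 ab by simp
  qed
  have vu1: "\<forall>a<n. \<forall>b<n. Bf n (v a) (u1 b) = - (if a = b then 1 else 0)"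
  proof (intro allI impI)
    fix a b assume ab: "a < n" "b < n"
    have "Bf n (v a) (u1 b) = - Bf n (u1 b) (v a)" by (rule Bf_anti)
    then show "Bf n (v a) (u1 b) = - (if a = b then 1 else 0)" using u1 ab by auto
  qed
  have uu: "\<forall>a<n. \<forall>b<n. Bf n (u a) (u b) = 0"
  proof (intro allI impI)
    fix a b assume ab: "a < n" "b < n"
    have e1: "Bf n X (u b) = Bf n X (u1 b) + (\<Sum>d\<in>{b<..<n}. S b d * Bf n X (v d))" for X
      unfolding u_def Bf_lin2 by simp
    have "Bf n (u a) (u b) = Bf n (u1 a) (u b) + (\<Sum>c\<in>{a<..<n}. S a c * Bf n (v c) (u b))"
      unfolding u_def[of a] Bf_lin1 by simp
    also have "Bf n (u1 a) (u b) = S a b + (\<Sum>d\<in>{b<..<n}. S b d * (if d = a then 1 else 0))"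
      unfolding e1 S_def using u1 ab by (intro arg_cong2[where f="(+)"] refl sum.cong) auto
    also have "\<dots> = S a b + (if a \<in> {b<..<n} then S b a else 0)"
      by (simp add: sum_delta_helper)
    also have "(\<Sum>c\<in>{a<..<n}. S a c * Bf n (v c) (u b)) = (\<Sum>c\<in>{a<..<n}. S a c * (- (if c = b then 1 else 0)))"
    proof (intro sum.cong refl)
      fix c assume c: "c \<in> {a<..<n}"
      have "Bf n (v c) (u b) = Bf n (v c) (u1 b) + (\<Sum>d\<in>{b<..<n}. S b d * Bf n (v c) (v d))"
        by (rule e1)
      also have "(\<Sum>d\<in>{b<..<n}. S b d * Bf n (v c) (v d)) = 0"
        using vv c by (intro sum.neutral) auto
      finally show "S a c * Bf n (v c) (u b) = S a c * (- (if c = b then 1 else 0))"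
        using vu1 c ab by auto
    qed
    also have "\<dots> = - (\<Sum>c\<in>{a<..<n}. S a c * (if c = b then 1 else 0))"
      by (simp add: sum_negf[symmetric])
    also have "\<dots> = - (if b \<in> {a<..<n} then S a b else 0)"
      by (simp add: sum_delta_helper)
    finally have fin: "Bf n (u a) (u b) = S a b + (if a \<in> {b<..<n} then S b a else 0) + - (if b \<in> {a<..<n} then S a b else 0)" .
    have Sba: "S b a = - S a b" unfolding S_def by (rule Bf_anti)
    have Saa: "S a a = 0" unfolding S_def by (rule Bf_self)
    show "Bf n (u a) (u b) = 0"
    proof (cases a b rule: linorder_cases)
      case less then show ?thesis using fin ab by simp
    next
      case equal then show ?thesis using fin ab Saa by simp
    next
      case greater then show ?thesis using fin ab Sba by simp
    qed
  qed
  have "u (n-1) = w"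
  proof -
    have "{n-1<..<n} = ({}::nat set)" by auto
    then show ?thesis unfolding u_def u1_def by simp
  qed
  then show ?thesis using uu uv by blast
qed

lemma Omega_carrier: "Omega n \<in> carrier_mat (2*n) (2*n)"
  unfolding Omega_def carrier_mat_def by simp

lemma Omega_index: "i < 2*n \<Longrightarrow> j < 2*n \<Longrightarrow> Omega n $$ (i,j) =
   (if i < n \<and> j = i + n then 1 else if n \<le> i \<and> j = i - n then -1 else 0)"
  unfolding Omega_def by (simp add: index_mat_four_block one_mat_def) linarith

lemma Omega_mult_vec: "i < 2*n \<Longrightarrow> (Omega n *\<^sub>v vec (2*n) Y) $ i = (if i < n then Y (i+n) else - Y (i-n))"
proof -
  assume i: "i < 2*n"
  have "(Omega n *\<^sub>v vec (2*n) Y) $ i = (\<Sum>j\<in>{0..<2*n}. Omega n $$ (i,j) * Y j)"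
    using i Omega_carrier[of n] by (auto simp: scalar_prod_def row_def)
  also have "\<dots> = (\<Sum>j\<in>{0..<2*n}. (if j = (if i < n then i + n else i - n) then (if i < n then Y (i+n) else - Y (i-n)) else 0))"
    using i by (intro sum.cong refl) (auto simp: Omega_index)
  also have "\<dots> = (if i < n then Y (i+n) else - Y (i-n))"
    using i by (cases "i < n") (simp_all add: sum.delta)
  finally show ?thesis .
qed

lemma Cform_Bf: "Cform n (vec (2*n) X) (vec (2*n) Y) = Bf n X Y"
proof -
  have "Cform n (vec (2*n) X) (vec (2*n) Y) = (\<Sum>i\<in>{0..<2*n}. X i * (if i < n then Y (i+n) else - Y (i-n)))"
    unfolding Cform_def scalar_prod_def using Omega_carrier[of n]
    by (intro sum.cong) (auto simp: Omega_mult_vec simp del: index_mult_mat_vec)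
  also have "\<dots> = (\<Sum>i\<in>{0..<n}. X i * Y (i+n)) + (\<Sum>i\<in>{n..<2*n}. X i * (- Y (i-n)))"
    by (subst sum.atLeastLessThan_concat[of 0 n "2*n", symmetric]) auto
  also have "(\<Sum>i\<in>{n..<2*n}. X i * (- Y (i-n))) = (\<Sum>i\<in>{0..<n}. X (i+n) * (- Y i))"
    using sum.shift_bounds_nat_ivl[of "\<lambda>i. X i * (- Y (i-n))" 0 n n] by (simp add: mult_2)
  finally show ?thesis unfolding Bf_def by (simp add: atLeast0LessThan sum_subtractf sum_negf)
qed

lemma symp_from_rows:
  assumes "\<forall>a<2*n. \<forall>b<2*n. Bf n (R a) (R b) = (if a < n \<and> b = a + n then 1 else if n \<le> a \<and> b = a - n then -1 else 0)"
  shows "symplectic n (mat (2*n) (2*n) (\<lambda>(a,b). R a b))"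
proof -
  define P where "P = mat (2*n) (2*n) (\<lambda>(a,b). R a b)"
  have P: "P \<in> carrier_mat (2*n) (2*n)" unfolding P_def by simp
  have O: "Omega n \<in> carrier_mat (2*n) (2*n)" by (rule Omega_carrier)
  have "P * Omega n * transpose_mat P = Omega n"
  proof (rule eq_matI)
    fix a b assume ab: "a < dim_row (Omega n)" "b < dim_col (Omega n)"
    then have a: "a < 2*n" and b: "b < 2*n" using O by auto
    have "(P * Omega n * transpose_mat P) $$ (a,b) = (P * (Omega n * transpose_mat P)) $$ (a,b)"
      using P O by (subst assoc_mult_mat[where n\<^sub>1="2*n" and n\<^sub>2="2*n" and n\<^sub>3="2*n" and n\<^sub>4="2*n"]) auto
    also have "\<dots> = row P a \<bullet> col (Omega n * transpose_mat P) b"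
      using P O a b by (subst index_mult_mat) auto
    also have "col (Omega n * transpose_mat P) b = Omega n *\<^sub>v row P b"
      using P O b by (subst col_mult2[where nr="2*n" and n="2*n" and nc="2*n"]) auto
    also have "row P a \<bullet> (Omega n *\<^sub>v row P b) = Bf n (R a) (R b)"
      using a b unfolding P_def by (simp add: Cform_Bf[unfolded Cform_def])
    finally show "(P * Omega n * transpose_mat P) $$ (a,b) = Omega n $$ (a,b)"
      using assms a b by (simp add: Omega_index)
  qed (use P O in auto)
  then show ?thesis using P unfolding symplectic_def P_def by simp
qed



theorem proposition4p3:
  fixes n :: nat and S :: "complex set"
    and F :: "complex \<Rightarrow> nat \<Rightarrow> complex"
    and Fd :: "nat \<Rightarrow> complex \<Rightarrow> nat \<Rightarrow> complex"
  assumes "n \<ge> 1"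
    and "open S"
    and "Fd 0 = F"
    and "\<And>j k x. j < n \<Longrightarrow> k < 2*n \<Longrightarrow> x \<in> S \<Longrightarrow>
           ((\<lambda>t. Fd j t k) has_field_derivative Fd (Suc j) x k) (at x)"
    and "\<And>i x. i + 2 \<le> n \<Longrightarrow> x \<in> S \<Longrightarrow>
           Cform n (vec (2*n) (Fd i x)) (vec (2*n) (Fd (Suc i) x)) = 0"
    and "\<And>x. x \<in> S \<Longrightarrow>
           Cform n (vec (2*n) (Fd (n - 1) x)) (vec (2*n) (Fd n x)) = -1"
  shows "\<forall>x\<in>S. \<exists>Phi. symplectic n Phi \<and>
           row Phi (n - 1) = vec (2*n) (Fd n x) \<and>
           (\<forall>j<n. row Phi (n + j) = vec (2*n) (Fd j x))"
proof
  fix x assume xS: "x \<in> S"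
  note n1 = assms(1) and oS = assms(2) and F0 = assms(3) and dF = assms(4)
    and h1 = assms(5) and h2 = assms(6)
  define D where "D m t k = (deriv ^^ m) (\<lambda>t. F t k) t" for m t k
  have hol: "(\<lambda>t. F t k) holomorphic_on S" if "k < 2*n" for k
  proof -
    have "\<forall>t\<in>S. \<exists>f'. ((\<lambda>t. F t k) has_field_derivative f') (at t)"
      using dF[of 0 k] n1 that F0 by auto
    then show ?thesis using holomorphic_on_open[OF oS] by blast
  qed
  have DD: "((\<lambda>t. D m t k) has_field_derivative D (Suc m) t k) (at t)" if "k < 2*n" "t \<in> S" for m k t
  proof -
    have "((deriv ^^ m) (\<lambda>t. F t k) has_field_derivative deriv ((deriv ^^ m) (\<lambda>t. F t k)) t) (at t)"
      by (rule holomorphic_derivI[OF holomorphic_higher_deriv[OF hol[OF that(1)] oS] oS that(2)])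
    then show ?thesis unfolding D_def by simp
  qed
  have EQ: "\<forall>k<2*n. \<forall>t\<in>S. Fd j t k = D j t k" if "j \<le> n" for j
    using that
  proof (induction j)
    case 0 then show ?case using F0 unfolding D_def by simp
  next
    case (Suc j)
    show ?case
    proof (intro allI impI ballI)
      fix k t assume k: "k < 2*n" and t: "t \<in> S"
      have "((\<lambda>t. Fd j t k) has_field_derivative Fd (Suc j) t k) (at t)"
        using dF[of j k t] Suc.prems k t by auto
      then have "((\<lambda>t. D j t k) has_field_derivative Fd (Suc j) t k) (at t)"
        by (rule has_field_derivative_transform_within_open[OF _ oS t]) (use Suc.IH Suc.prems k in auto)
      then show "Fd (Suc j) t k = D (Suc j) t k" using DD[OF k t] DERIV_unique by blast
    qed
  qed
  define g where "g i j t = Bf n (D i t) (D j t)" for i j t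
  have Bf_cong: "Bf n X Y = Bf n X' Y'" if "\<forall>k<2*n. X k = X' k" "\<forall>k<2*n. Y k = Y' k" for X Y X' Y'
    unfolding Bf_def using that by (intro sum.cong refl) auto
  have GD: "((\<lambda>t. g i j t) has_field_derivative g (Suc i) j t + g i (Suc j) t) (at t)" if "t \<in> S" for i j t
  proof -
    have "((\<lambda>t. g i j t) has_field_derivative (\<Sum>k<n.
        (D (Suc i) t k * D j t (k+n) + D (Suc j) t (k+n) * D i t k) -
        (D (Suc i) t (k+n) * D j t k + D (Suc j) t k * D i t (k+n)))) (at t)"
      unfolding g_def Bf_def
      by (intro DERIV_sum DERIV_diff DERIV_mult DD that) auto
    moreover have "(\<Sum>k<n.
        (D (Suc i) t k * D j t (k+n) + D (Suc j) t (k+n) * D i t k) -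
        (D (Suc i) t (k+n) * D j t k + D (Suc j) t k * D i t (k+n))) = g (Suc i) j t + g i (Suc j) t"
      unfolding g_def Bf_def sum.distrib[symmetric] by (intro sum.cong refl) (simp add: algebra_simps)
    ultimately show ?thesis by simp
  qed
  have Z0: "\<forall>t\<in>S. g (Suc i) j t = - g i (Suc j) t" if "\<forall>t\<in>S. g i j t = 0" for i j
  proof
    fix t assume t: "t \<in> S"
    have "((\<lambda>t. 0) has_field_derivative g (Suc i) j t + g i (Suc j) t) (at t)"
      by (rule has_field_derivative_transform_within_open[OF GD[OF t] oS t]) (use that in auto)
    then have "g (Suc i) j t + g i (Suc j) t = 0" using DERIV_const DERIV_unique by blast
    then show "g (Suc i) j t = - g i (Suc j) t" by (simp add: eq_neg_iff_add_eq_0)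
  qed
  have CH: "\<forall>i\<le>Suc s. \<forall>t\<in>S. g i (Suc s - i) t = (-1)^i * g 0 (Suc s) t"
    if Zs: "\<forall>i\<le>s. \<forall>t\<in>S. g i (s - i) t = 0" for s
  proof (intro allI impI)
    fix i assume "i \<le> Suc s"
    then show "\<forall>t\<in>S. g i (Suc s - i) t = (-1)^i * g 0 (Suc s) t"
    proof (induction i)
      case 0 then show ?case by simp
    next
      case (Suc i)
      then have isl: "i \<le> s" by simp
      have "\<forall>t\<in>S. g (Suc i) (s - i) t = - g i (Suc (s - i)) t"
        using Z0 Zs isl by blast
      moreover have "Suc (s - i) = Suc s - i" "Suc s - Suc i = s - i" using isl by auto
      ultimately show ?case using Suc.IH isl by auto
    qed
  qed
  have gself: "g i i t = 0" for i t unfolding g_def by (rule Bf_self)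
  have ganti: "g i j t = - g j i t" for i j t unfolding g_def by (rule Bf_anti)
  have gh1: "\<forall>t\<in>S. g i (Suc i) t = 0" if "i + 2 \<le> n" for i
  proof
    fix t assume t: "t \<in> S"
    have "g i (Suc i) t = Cform n (vec (2*n) (Fd i t)) (vec (2*n) (Fd (Suc i) t))"
      unfolding Cform_Bf g_def using EQ[of i] EQ[of "Suc i"] that t by (intro Bf_cong) auto
    then show "g i (Suc i) t = 0" using h1[OF that t] by simp
  qed
  have gh2: "g (n-1) n t = -1" if t: "t \<in> S" for t
  proof -
    have "g (n-1) n t = Cform n (vec (2*n) (Fd (n-1) t)) (vec (2*n) (Fd n t))"
      unfolding Cform_Bf g_def using EQ[of "n-1"] EQ[of n] t by (intro Bf_cong) auto
    then show ?thesis using h2[OF t] by simp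
  qed
  have Z: "\<forall>i\<le>s. \<forall>t\<in>S. g i (s - i) t = 0" if "s \<le> 2*n - 2" for s
    using that
  proof (induction s)
    case 0 then show ?case using gself by simp
  next
    case (Suc s)
    have ch: "\<forall>i\<le>Suc s. \<forall>t\<in>S. g i (Suc s - i) t = (-1)^i * g 0 (Suc s) t"
    proof -
      have "\<forall>i\<le>s. \<forall>t\<in>S. g i (s - i) t = 0" using Suc.IH Suc.prems by simp
      then show ?thesis by (rule CH)
    qed
    define m where "m = Suc s div 2"
    have m: "m \<le> Suc s" unfolding m_def by simp
    have "\<forall>t\<in>S. g m (Suc s - m) t = 0"
    proof (cases "even (Suc s)")
      case True
      then have "Suc s - m = m" unfolding m_def by presburger
      then show ?thesis using gself by simp
    next
      case False
      then have "Suc s - m = Suc m" "m + 2 \<le> n" using Suc.prems unfolding m_def by presburger+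
      then show ?thesis using gh1 by simp
    qed
    then have g0: "\<forall>t\<in>S. g 0 (Suc s) t = 0"
    proof (intro ballI)
      fix t assume gm: "\<forall>t\<in>S. g m (Suc s - m) t = 0" and t: "t \<in> S"
      have "g m (Suc s - m) t = (-1)^m * g 0 (Suc s) t" using ch m t by blast
      then show "g 0 (Suc s) t = 0" using gm t by simp
    qed
    show ?case
    proof (intro allI impI ballI)
      fix i t assume i: "i \<le> Suc s" and t: "t \<in> S"
      have "g i (Suc s - i) t = (-1)^i * g 0 (Suc s) t" using ch i t by blast
      then show "g i (Suc s - i) t = 0" using g0 t by simp
    qed
  qed
  have O: "g i (2*n - 1 - i) t \<noteq> 0" if "i \<le> 2*n - 1" "t \<in> S" for i t
  proof -
    have s: "2*n - 1 = Suc (2*n - 2)" using n1 by simp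
    have ch: "\<forall>i\<le>2*n-1. \<forall>t\<in>S. g i (2*n-1 - i) t = (-1)^i * g 0 (2*n-1) t"
      unfolding s by (rule CH[OF Z]) simp
    have "g (n-1) n t = (-1)^(n-1) * g 0 (2*n-1) t"
    proof -
      have "n - 1 \<le> 2*n - 1" by simp
      then have "g (n-1) (2*n - 1 - (n-1)) t = (-1)^(n-1) * g 0 (2*n-1) t" using ch that(2) by blast
      moreover have "2*n - 1 - (n-1) = n" using n1 by simp
      ultimately show ?thesis by simp
    qed
    then have "g 0 (2*n-1) t \<noteq> 0" using gh2[OF that(2)] by auto
    moreover have "g i (2*n - 1 - i) t = (-1)^i * g 0 (2*n-1) t" using ch that by blast
    ultimately show ?thesis by simp
  qed
  have Zx: "g i j x = 0" if "i + j \<le> 2*n - 2" for i j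
  proof -
    have "i \<le> i + j" by simp
    then have "g i (i + j - i) x = 0" using Z[OF that] xS by blast
    then show ?thesis by simp
  qed
  define v where "v j = D j x" for j
  define y where "y k = D (2*n - 1 - k) x" for k
  have vv: "\<forall>a<n. \<forall>b<n. Bf n (v a) (v b) = 0"
  proof (intro allI impI)
    fix a b assume "a < n" "b < n"
    then have "a + b \<le> 2*n - 2" by linarith
    then show "Bf n (v a) (v b) = 0" using Zx unfolding v_def g_def by blast
  qed
  have yv: "\<forall>k<n. \<forall>j<k. Bf n (y k) (v j) = 0"
  proof (intro allI impI)
    fix k j assume "k < n" "j < k"
    then have "g j (2*n - 1 - k) x = 0" by (intro Zx) auto
    then show "Bf n (y k) (v j) = 0" unfolding y_def v_def g_def using Bf_anti[of n "D (2*n - 1 - k) x" "D j x"] by simp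
  qed
  have yvk: "\<forall>k<n. Bf n (y k) (v k) \<noteq> 0"
  proof (intro allI impI)
    fix k assume k: "k < n"
    have e: "2*n - 1 - (2*n - 1 - k) = k" using k by auto
    have "g (2*n - 1 - k) k x \<noteq> 0" using O[of "2*n-1-k" x] xS e by auto
    then show "Bf n (y k) (v k) \<noteq> 0" unfolding y_def v_def g_def .
  qed
  have wv: "\<forall>j<n. Bf n (D n x) (v j) = (if n - 1 = j then 1 else 0)"
  proof (intro allI impI)
    fix j assume j: "j < n"
    have "Bf n (D n x) (v j) = - g j n x" unfolding v_def g_def by (rule Bf_anti)
    moreover have "j < n - 1 \<Longrightarrow> g j n x = 0" by (intro Zx) auto
    moreover have "j = n - 1 \<Longrightarrow> g j n x = -1" using gh2[OF xS] by simp
    ultimately show "Bf n (D n x) (v j) = (if n - 1 = j then 1 else 0)" using j by auto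
  qed
  obtain u where u: "u (n-1) = D n x" "\<forall>a<n. \<forall>b<n. Bf n (u a) (u b) = 0"
    "\<forall>a<n. \<forall>b<n. Bf n (u a) (v b) = (if a=b then 1 else 0)"
    using symp_complete[OF vv yv yvk wv n1] by blast
  define R where "R a = (if a < n then u a else v (a - n))" for a
  have cond: "\<forall>a<2*n. \<forall>b<2*n. Bf n (R a) (R b) = (if a < n \<and> b = a + n then 1 else if n \<le> a \<and> b = a - n then -1 else 0)"
  proof (intro allI impI)
    fix a b assume a: "a < 2*n" and b: "b < 2*n"
    show "Bf n (R a) (R b) = (if a < n \<and> b = a + n then 1 else if n \<le> a \<and> b = a - n then -1 else 0)"
    proof (cases "a < n"; cases "b < n")
      assume ab: "a < n" "b < n"
      have "R a = u a" "R b = u b" using ab by (simp_all add: R_def)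
      then show ?thesis using u(2) ab by simp
    next
      assume ab: "a < n" "\<not> b < n"
      have "R a = u a" "R b = v (b - n)" using ab by (simp_all add: R_def)
      moreover have "b - n < n" using b ab by linarith
      ultimately have "Bf n (R a) (R b) = (if a = b - n then 1 else 0)" using u(3) ab by simp
      moreover have "(a = b - n) = (b = a + n)" using ab by linarith
      ultimately show ?thesis using ab by simp
    next
      assume ab: "\<not> a < n" "b < n"
      have "R a = v (a - n)" "R b = u b" using ab by (simp_all add: R_def)
      moreover have an: "a - n < n" using a ab by linarith
      ultimately have "Bf n (R a) (R b) = - Bf n (u b) (v (a - n))" using Bf_anti[of n "v (a - n)" "u b"] by simp
      also have "\<dots> = - (if b = a - n then 1 else 0)" using u(3) ab an by simp
      finally show ?thesis using ab by simp
    next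
      assume ab: "\<not> a < n" "\<not> b < n"
      have "R a = v (a - n)" "R b = v (b - n)" using ab by (simp_all add: R_def)
      moreover have "a - n < n" "b - n < n" using a b ab by linarith+
      ultimately have "Bf n (R a) (R b) = 0" using vv by simp
      moreover have "\<not> (b = a - n)" using ab a b by linarith
      ultimately show ?thesis using ab by simp
    qed
  qed
  define Phi where "Phi = mat (2*n) (2*n) (\<lambda>(a,b). R a b)"
  have "symplectic n Phi" unfolding Phi_def by (rule symp_from_rows[OF cond])
  moreover have "row Phi (n - 1) = vec (2*n) (Fd n x)"
  proof -
    have "row Phi (n - 1) = vec (2*n) (R (n - 1))" unfolding Phi_def using n1 by simp
    also have "R (n - 1) = D n x" using u(1) n1 by (simp add: R_def)
    also have "vec (2*n) (D n x) = vec (2*n) (Fd n x)"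
      using EQ[of n] xS by (intro eq_vecI) auto
    finally show ?thesis .
  qed
  moreover have "\<forall>j<n. row Phi (n + j) = vec (2*n) (Fd j x)"
  proof (intro allI impI)
    fix j assume j: "j < n"
    have "row Phi (n + j) = vec (2*n) (R (n + j))" unfolding Phi_def using j by simp
    also have "R (n + j) = D j x" by (simp add: R_def v_def)
    also have "vec (2*n) (D j x) = vec (2*n) (Fd j x)"
      using EQ[of j] xS j by (intro eq_vecI) auto
    finally show "row Phi (n + j) = vec (2*n) (Fd j x)" .
  qed
  ultimately show "\<exists>Phi. symplectic n Phi \<and>
           row Phi (n - 1) = vec (2*n) (Fd n x) \<and>
           (\<forall>j<n. row Phi (n + j) = vec (2*n) (Fd j x))" by blast
qed

end
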